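(* There is a constant $c > 0$ such that every chordal graph on $n$ vertices has at least $c \cdot 2^n$ perfect elimination orderings; that is, the number of perfect elimination orderings of an $n$-vertex chordal graph is $\Omega(2^n)$.
   Context: A graph is chordal if every cycle of length at least 4 has a chord (an edge joining two non-consecutive vertices of the cycle). A vertex is simplicial if its neighbourhood is a clique. A perfect elimination ordering (PEO) of a graph $G$ is an ordering $(v_1, \ldots, v_n)$ of $V(G)$ such that for each $i$, the set of neighbours of $v_i$ in the subgraph induced by $\{v_i, v_{i+1}, \ldots, v_n\}$ is a clique. *)

theory Defs
  imports Complex_Main
begin

definition simple_graph :: "'a set \<Rightarrow> ('a \<Rightarrow> 'a \<Rightarrow> bool) \<Rightarrow> bool" where
  "simple_graph V E \<longleftrightarrow> finite V \<and>
     (\<forall>x y. E x y \<longrightarrow> x \<in> V \<and> y \<in> V) \<and>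
     (\<forall>x y. E x y \<longrightarrow> E y x) \<and> (\<forall>x. \<not> E x x)"

definition is_cycle :: "'a set \<Rightarrow> ('a \<Rightarrow> 'a \<Rightarrow> bool) \<Rightarrow> 'a list \<Rightarrow> bool" where
  "is_cycle V E vs \<longleftrightarrow> length vs \<ge> 3 \<and> distinct vs \<and> set vs \<subseteq> V \<and>
     (\<forall>i < length vs. E (vs ! i) (vs ! ((i + 1) mod length vs)))"

definition has_chord :: "('a \<Rightarrow> 'a \<Rightarrow> bool) \<Rightarrow> 'a list \<Rightarrow> bool" where
  "has_chord E vs \<longleftrightarrow> (\<exists>i < length vs. \<exists>j < length vs. i \<noteq> j \<and>
     j \<noteq> (i + 1) mod length vs \<and> i \<noteq> (j + 1) mod length vs \<and>
     E (vs ! i) (vs ! j))"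

definition chordal :: "'a set \<Rightarrow> ('a \<Rightarrow> 'a \<Rightarrow> bool) \<Rightarrow> bool" where
  "chordal V E \<longleftrightarrow> (\<forall>vs. is_cycle V E vs \<and> length vs \<ge> 4 \<longrightarrow> has_chord E vs)"

definition is_clique :: "('a \<Rightarrow> 'a \<Rightarrow> bool) \<Rightarrow> 'a set \<Rightarrow> bool" where
  "is_clique E S \<longleftrightarrow> (\<forall>x\<in>S. \<forall>y\<in>S. x \<noteq> y \<longrightarrow> E x y)"

definition is_peo :: "'a set \<Rightarrow> ('a \<Rightarrow> 'a \<Rightarrow> bool) \<Rightarrow> 'a list \<Rightarrow> bool" where
  "is_peo V E \<sigma> \<longleftrightarrow> distinct \<sigma> \<and> set \<sigma> = V \<and>
     (\<forall>i < length \<sigma>. is_clique E {u \<in> set (drop i \<sigma>). E (\<sigma> ! i) u})"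

end

theory Submission
  imports Defs
begin

lemma succ_take: "successively E xs \<Longrightarrow> successively E (take n xs)"
  by (metis append_take_drop_id successively_append_iff)
lemma succ_drop: "successively E xs \<Longrightarrow> successively E (drop n xs)"
  by (metis append_take_drop_id successively_append_iff)

lemma shortcut:
  assumes su: "successively E (s # Q @ [t])" and QW: "set Q \<subseteq> W"
    and ij: "i + 1 < j" "j < length Q + 2"
    and e: "E ((s # Q @ [t]) ! i) ((s # Q @ [t]) ! j)"
  shows "\<exists>Q'. set Q' \<subseteq> W \<and> successively E (s # Q' @ [t]) \<and> length Q' < length Q"
proof -
  define P where "P = s # Q @ [t]"
  define Q' where "Q' = take i Q @ drop (j - 1) Q"
  have eq: "s # Q' @ [t] = take (i+1) P @ drop j P"
  proof -
    obtain j' where j': "j = Suc j'" using ij by (cases j) auto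
    have "take (i+1) P = s # take i Q" using ij unfolding P_def by simp
    moreover have "drop j P = drop j' Q @ [t]" using ij j' unfolding P_def by simp
    ultimately show ?thesis unfolding Q'_def using j' by simp
  qed
  have lP: "length P = length Q + 2" unfolding P_def by simp
  have "successively E (take (i+1) P @ drop j P)"
    unfolding successively_append_iff
  proof (intro conjI)
    show "successively E (take (i+1) P)" using su succ_take unfolding P_def by blast
    show "successively E (drop j P)" using su succ_drop unfolding P_def by blast
    have "last (take (i+1) P) = P ! i" using ij lP by (simp add: take_Suc_conv_app_nth)
    moreover have "hd (drop j P) = P ! j" using ij lP by (simp add: hd_drop_conv_nth)
    ultimately show "take (i + 1) P = [] \<or> drop j P = [] \<or> E (last (take (i + 1) P)) (hd (drop j P))"
      using e unfolding P_def by simp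
  qed
  hence "successively E (s # Q' @ [t])" using eq by simp
  moreover have "set Q' \<subseteq> W" unfolding Q'_def using QW
    by (auto dest: in_set_takeD in_set_dropD)
  moreover have "length Q' < length Q" unfolding Q'_def using ij by simp
  ultimately show ?thesis by blast
qed


lemma no_chordless:
  assumes sg: "simple_graph V E" and ch: "chordal V E" and xV: "x \<in> V"
    and WV: "W \<subseteq> V" and xnW: "x \<notin> W" and xW: "\<forall>w\<in>W. \<not> E x w"
    and xs: "E x s" and xt: "E x t" and st: "s \<noteq> t" "\<not> E s t"
    and Q0: "set Q0 \<subseteq> W" "successively E (s # Q0 @ [t])"
  shows False
proof -
  have sym: "\<And>a b. E a b \<Longrightarrow> E b a" and irr: "\<And>a. \<not> E a a"
    and inV: "\<And>a b. E a b \<Longrightarrow> a \<in> V \<and> b \<in> V"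
    using sg unfolding simple_graph_def by blast+
  define good where "good Q \<longleftrightarrow> set Q \<subseteq> W \<and> successively E (s # Q @ [t])" for Q
  define n0 where "n0 = (LEAST n. \<exists>Q. good Q \<and> length Q = n)"
  have ex: "\<exists>n Q. good Q \<and> length Q = n" using Q0 unfolding good_def by blast
  have "\<exists>Q. good Q \<and> length Q = n0" unfolding n0_def by (rule LeastI_ex[OF ex])
  then obtain Q where gQ: "good Q" and lQ: "length Q = n0" by blast
  have min: "length Q \<le> length Q'" if "good Q'" for Q'
  proof -
    have "n0 \<le> length Q'" unfolding n0_def by (rule Least_le) (use that in blast)
    thus ?thesis using lQ by simp
  qed
  define P where "P = s # Q @ [t]"
  have QW: "set Q \<subseteq> W" using gQ unfolding good_def by simp
  have suP: "successively E P" using gQ unfolding good_def P_def by simp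
  have nosc: "\<not> E (P ! i) (P ! j)" if ij: "i + 1 < j" "j < length Q + 2" for i j
  proof
    assume e: "E (P ! i) (P ! j)"
    have su: "successively E (s # Q @ [t])" using suP unfolding P_def .
    obtain Q' where "set Q' \<subseteq> W" "successively E (s # Q' @ [t])" "length Q' < length Q"
      using shortcut[OF su QW ij e[unfolded P_def]] by blast
    hence "good Q'" "length Q' < length Q" unfolding good_def by simp_all
    thus False using min[of Q'] by simp
  qed
  have lP: "length P = length Q + 2" unfolding P_def by simp
  have P0: "P ! 0 = s" unfolding P_def by simp
  have Plast: "P ! (length Q + 1) = t" unfolding P_def by (simp add: nth_append)
  have PQ: "P ! k = Q ! (k - 1)" if "1 \<le> k" "k \<le> length Q" for k
    using that unfolding P_def by (cases k) (auto simp: nth_append)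
  have Qne: "Q \<noteq> []"
  proof
    assume "Q = []"
    hence "successively E [s, t]" using suP unfolding P_def by simp
    thus False using st by simp
  qed
  have sQ: "s \<notin> set Q" "t \<notin> set Q" using QW xW xs xt by auto
  have dQ: "distinct Q"
  proof (rule ccontr)
    assume "\<not> distinct Q"
    then obtain a b where ab: "a < b" "b < length Q" "Q ! a = Q ! b"
      unfolding distinct_conv_nth by (metis linorder_neqE_nat)
    have "E (P ! (b + 1)) (P ! Suc (b + 1))" using successively_nth[OF suP, of "b+1"] lP ab by simp
    moreover have "P ! (b+1) = P ! (a+1)" using PQ[of "b+1"] PQ[of "a+1"] ab by simp
    ultimately have "E (P ! (a+1)) (P ! (b+2))" by simp
    thus False using nosc[of "a+1" "b+2"] ab by simp
  qed
  have dP: "distinct P" unfolding P_def using dQ sQ st by simp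
  have xP: "x \<notin> set P" unfolding P_def using xnW QW irr xs xt by auto
  define L where "L = x # P"
  define m where "m = length L"
  have m: "m = length Q + 3" unfolding m_def L_def using lP by simp
  have L0: "L ! 0 = x" and LS: "\<And>k. L ! Suc k = P ! k" unfolding L_def by auto
  have cyc: "is_cycle V E L"
    unfolding is_cycle_def
  proof (intro conjI allI impI)
    show "3 \<le> length L" using m m_def Qne by (cases Q) auto
    show "distinct L" using dP xP unfolding L_def by simp
    have "set P \<subseteq> V" unfolding P_def using QW WV inV xs xt by auto
    thus "set L \<subseteq> V" unfolding L_def using xV by simp
    fix k assume k: "k < length L"
    show "E (L ! k) (L ! ((k + 1) mod length L))"
    proof (cases "k + 1 < length L")
      case True
      hence md: "(k + 1) mod length L = k + 1" by simp
      show ?thesis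
      proof (cases k)
        case 0 thus ?thesis using md L0 LS P0 xs by simp
      next
        case (Suc k')
        have "E (P ! k') (P ! Suc k')" using successively_nth[OF suP, of k'] True Suc unfolding L_def
          by simp
        thus ?thesis using md Suc LS by simp
      qed
    next
      case False
      hence "k = length Q + 2" using k m m_def by simp
      hence kk: "k + 1 = length L" using m m_def by simp
      have "L ! k = t" using LS[of "length Q + 1"] Plast \<open>k = length Q + 2\<close> by simp
      moreover have "(k + 1) mod length L = 0" using kk by simp
      ultimately have "L ! k = t" "(k + 1) mod length L = 0" by auto
      thus ?thesis using L0 sym[OF xt] by simp
    qed
  qed
  have helper: False if ij: "i < j" "j < m" "j \<noteq> (i + 1) mod m" "i \<noteq> (j + 1) mod m"
      and e: "E (L ! i) (L ! j)" for i j
  proof -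
    have "(i + 1) mod m = i + 1" using ij by simp
    hence ij1: "i + 1 < j" using ij by simp
    show False
    proof (cases i)
      case 0
      have "j \<noteq> m - 1"
      proof
        assume "j = m - 1" hence "j + 1 = m" using m by simp hence "(j + 1) mod m = 0" by simp
        thus False using ij 0 by simp
      qed
      then obtain j' where j': "j = Suc j'" "1 \<le> j'" "j' \<le> length Q" using ij1 ij m 0
        by (cases j) auto
      have "L ! j = Q ! (j' - 1)" using LS PQ j' by simp
      moreover have "Q ! (j' - 1) \<in> W" using QW j' by auto
      ultimately show False using e 0 L0 xW by auto
    next
      case (Suc i')
      then obtain j' where j': "j = Suc j'" using ij by (cases j) auto
      show False using nosc[of i' j'] e LS Suc j' ij1 ij m by simp
    qed
  qed
  have "length L \<ge> 4" using m m_def Qne by (cases Q) auto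
  then obtain i j where ij: "i < m" "j < m" "i \<noteq> j" "j \<noteq> (i + 1) mod m" "i \<noteq> (j + 1) mod m"
      "E (L ! i) (L ! j)"
    using ch cyc unfolding chordal_def has_chord_def m_def by blast
  show False
  proof (cases "i < j")
    case True thus ?thesis using helper ij by blast
  next
    case False
    hence "j < i" using ij by simp
    thus ?thesis using helper[of j i] ij sym by blast
  qed
qed


definition ind :: "'a set \<Rightarrow> ('a \<Rightarrow> 'a \<Rightarrow> bool) \<Rightarrow> 'a \<Rightarrow> 'a \<Rightarrow> bool" where
  "ind U E = (\<lambda>a b. E a b \<and> a \<in> U \<and> b \<in> U)"

definition simpv :: "'a set \<Rightarrow> ('a \<Rightarrow> 'a \<Rightarrow> bool) \<Rightarrow> 'a \<Rightarrow> bool" where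
  "simpv V E v \<longleftrightarrow> v \<in> V \<and> is_clique E {u \<in> V. E v u}"

lemma ind_simple: "simple_graph V E \<Longrightarrow> U \<subseteq> V \<Longrightarrow> simple_graph U (ind U E)"
  unfolding simple_graph_def ind_def by (auto intro: finite_subset)

lemma ind_chordal:
  assumes "simple_graph V E" "chordal V E" "U \<subseteq> V"
  shows "chordal U (ind U E)"
  unfolding chordal_def
proof (intro allI impI)
  fix vs assume a: "is_cycle U (ind U E) vs \<and> 4 \<le> length vs"
  hence "is_cycle V E vs" using assms(3) unfolding is_cycle_def ind_def by auto
  hence "has_chord E vs" using a assms(2) unfolding chordal_def by blast
  moreover have "set vs \<subseteq> U" using a unfolding is_cycle_def by simp
  ultimately show "has_chord (ind U E) vs" unfolding has_chord_def ind_def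
    by (auto simp: subset_iff) (metis nth_mem)
qed

lemma clique_sub: "is_clique E A \<Longrightarrow> B \<subseteq> A \<Longrightarrow> is_clique E B"
  unfolding is_clique_def by blast

lemma clique_ind_imp: "is_clique (ind U E) A \<Longrightarrow> is_clique E A"
  unfolding is_clique_def ind_def by blast

lemma rt_walk:
  assumes "(\<lambda>u v. E u v \<and> u \<in> W \<and> v \<in> W)\<^sup>*\<^sup>* a b" "a \<in> W"
  shows "\<exists>xs. xs \<noteq> [] \<and> hd xs = a \<and> last xs = b \<and> set xs \<subseteq> W \<and> successively E xs"
  using assms(1)
proof (induction rule: rtranclp_induct)
  case base thus ?case using assms(2) by (intro exI[of _ "[a]"]) simp
next
  case (step b c)
  then obtain xs where xs: "xs \<noteq> []" "hd xs = a" "last xs = b" "set xs \<subseteq> W" "successively E xs" by blast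
  have "successively E (xs @ [c])" using xs step(2) by (simp add: successively_append_iff)
  thus ?case using xs step(2) by (intro exI[of _ "xs @ [c]"]) auto
qed

lemma rt_sym:
  assumes "\<And>u v. R u v \<Longrightarrow> R v u" "R\<^sup>*\<^sup>* a b"
  shows "R\<^sup>*\<^sup>* b a"
  using assms(2)
proof (induction rule: rtranclp_induct)
  case base thus ?case by simp
next
  case (step b c)
  thus ?case using assms(1) by (meson converse_rtranclp_into_rtranclp)
qed


lemma dirac:
  assumes "simple_graph V E" "chordal V E"
  shows "is_clique E V \<or> (\<exists>a\<in>V. \<exists>b\<in>V. a \<noteq> b \<and> \<not> E a b \<and> simpv V E a \<and> simpv V E b)"
  using assms
proof (induction "card V" arbitrary: V E rule: less_induct)
  case less
  note sg = less.prems(1) and ch = less.prems(2)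
  have sym: "\<And>a b. E a b \<Longrightarrow> E b a" and irr: "\<And>a. \<not> E a a"
    and inV: "\<And>a b. E a b \<Longrightarrow> a \<in> V \<and> b \<in> V" and finV: "finite V"
    using sg unfolding simple_graph_def by blast+
  show ?case
  proof (cases "is_clique E V")
    case True thus ?thesis by simp
  next
    case False
    then obtain x y where xy: "x \<in> V" "y \<in> V" "x \<noteq> y" "\<not> E x y"
      unfolding is_clique_def by blast
    define W where "W = {w \<in> V. w \<noteq> x \<and> \<not> E x w}"
    define R where "R = (\<lambda>u v. E u v \<and> u \<in> W \<and> v \<in> W)"
    define C where "C = {v. R\<^sup>*\<^sup>* y v}"
    define S where "S = {s \<in> V. E x s \<and> (\<exists>c\<in>C. E s c)}"
    have yW: "y \<in> W" unfolding W_def using xy by simp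
    have WV: "W \<subseteq> V" and xnW: "x \<notin> W" and xW: "\<forall>w\<in>W. \<not> E x w" unfolding W_def by auto
    have yC: "y \<in> C" unfolding C_def by simp
    have CW: "C \<subseteq> W"
    proof
      fix v assume "v \<in> C"
      hence "R\<^sup>*\<^sup>* y v" unfolding C_def by simp
      thus "v \<in> W" using yW by (cases rule: rtranclp.cases) (auto simp: R_def)
    qed
    have closed: "w \<in> C" if "c \<in> C" "w \<in> W" "E c w" for c w
    proof -
      have "R c w" using that CW unfolding R_def by auto
      thus ?thesis using that(1) unfolding C_def by (simp add: rtranclp.rtrancl_into_rtrancl)
    qed
    have Rsym: "\<And>u v. R u v \<Longrightarrow> R v u" unfolding R_def using sym by blast
    have walk: "\<exists>xs. xs \<noteq> [] \<and> hd xs = c1 \<and> last xs = c2 \<and> set xs \<subseteq> W \<and> successively E xs"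
      if "c1 \<in> C" "c2 \<in> C" for c1 c2
    proof -
      have "R\<^sup>*\<^sup>* c1 y" using rt_sym[of R y c1] Rsym that(1) unfolding C_def by blast
      moreover have "R\<^sup>*\<^sup>* y c2" using that(2) unfolding C_def by simp
      ultimately have "R\<^sup>*\<^sup>* c1 c2" by simp
      moreover have "c1 \<in> W" using that CW by auto
      ultimately show ?thesis using rt_walk[of E W c1 c2] unfolding R_def by blast
    qed
    have Scl: "is_clique E S"
      unfolding is_clique_def
    proof (intro ballI impI)
      fix s t assume st: "s \<in> S" "t \<in> S" "s \<noteq> t"
      show "E s t"
      proof (rule ccontr)
        assume nst: "\<not> E s t"
        obtain c1 where c1: "c1 \<in> C" "E s c1" using st S_def by blast
        obtain c2 where c2: "c2 \<in> C" "E t c2" using st S_def by blast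
        obtain xs where xs: "xs \<noteq> []" "hd xs = c1" "last xs = c2" "set xs \<subseteq> W" "successively E xs"
          using walk[OF c1(1) c2(1)] by blast
        have "successively E (s # xs @ [t])"
          using xs c1 c2 sym by (auto simp: successively_Cons successively_append_iff)
        thus False
          using no_chordless[OF sg ch xy(1) WV xnW xW _ _ st(3) nst xs(4)] st S_def by blast
      qed
    qed
    have nbrC: "u \<in> C \<union> S" if "c \<in> C" "E c u" for c u
    proof -
      have u: "u \<in> V" using inV that(2) by blast
      have "c \<in> W" using that CW by auto
      hence "u \<noteq> x" using that(2) xW sym by blast
      show ?thesis
      proof (cases "E x u")
        case True thus ?thesis using u that sym unfolding S_def by blast
      next
        case False
        hence "u \<in> W" using u \<open>u \<noteq> x\<close> unfolding W_def by simp
        thus ?thesis using closed that by blast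
      qed
    qed
    have CV: "C \<subseteq> V" using CW WV by simp
    have SV: "S \<subseteq> V" unfolding S_def by auto
    have xS: "x \<notin> S" unfolding S_def using irr by auto
    define U1 where "U1 = C \<union> S"
    have U1V: "U1 \<subseteq> V" unfolding U1_def using CV SV by simp
    have "U1 \<subset> V" using U1V xy(1) xnW CW xS unfolding U1_def by auto
    hence cU1: "card U1 < card V" using finV by (simp add: psubset_card_mono)
    have IH1: "is_clique (ind U1 E) U1 \<or> (\<exists>a\<in>U1. \<exists>b\<in>U1. a \<noteq> b \<and> \<not> ind U1 E a b \<and>
        simpv U1 (ind U1 E) a \<and> simpv U1 (ind U1 E) b)"
      using less.hyps[OF cU1 ind_simple[OF sg U1V] ind_chordal[OF sg ch U1V]] .
    obtain c where cC: "c \<in> C" and sc1: "simpv U1 (ind U1 E) c"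
    proof (cases "is_clique (ind U1 E) U1")
      case True
      have "simpv U1 (ind U1 E) y" unfolding simpv_def using yC True U1_def
        by (auto intro: clique_sub)
      thus ?thesis using that yC by blast
    next
      case False
      then obtain a b where ab: "a \<in> U1" "b \<in> U1" "a \<noteq> b" "\<not> ind U1 E a b"
        "simpv U1 (ind U1 E) a" "simpv U1 (ind U1 E) b" using IH1 by blast
      have "\<not> E a b" using ab unfolding ind_def by simp
      hence "a \<in> C \<or> b \<in> C" using ab Scl unfolding U1_def is_clique_def by blast
      thus ?thesis using that ab by blast
    qed
    have sc: "simpv V E c"
    proof -
      have "{u \<in> V. E c u} = {u \<in> U1. ind U1 E c u}"
        using nbrC[OF cC] cC U1V unfolding U1_def ind_def by auto
      thus ?thesis using sc1 cC CV unfolding simpv_def by (auto intro: clique_ind_imp)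
    qed
    define U2 where "U2 = V - C"
    have U2V: "U2 \<subseteq> V" unfolding U2_def by auto
    have "U2 \<subset> V" using yC CV unfolding U2_def by auto
    hence cU2: "card U2 < card V" using finV by (simp add: psubset_card_mono)
    have IH2: "is_clique (ind U2 E) U2 \<or> (\<exists>a\<in>U2. \<exists>b\<in>U2. a \<noteq> b \<and> \<not> ind U2 E a b \<and>
        simpv U2 (ind U2 E) a \<and> simpv U2 (ind U2 E) b)"
      using less.hyps[OF cU2 ind_simple[OF sg U2V] ind_chordal[OF sg ch U2V]] .
    have xU2: "x \<in> U2" unfolding U2_def using xy(1) xnW CW by auto
    obtain d where dU: "d \<in> U2" "d \<notin> S" and sd1: "simpv U2 (ind U2 E) d"
    proof (cases "is_clique (ind U2 E) U2")
      case True
      have "simpv U2 (ind U2 E) x" unfolding simpv_def using xU2 True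
        by (auto intro: clique_sub)
      thus ?thesis using that xU2 xS by blast
    next
      case False
      then obtain a b where ab: "a \<in> U2" "b \<in> U2" "a \<noteq> b" "\<not> ind U2 E a b"
        "simpv U2 (ind U2 E) a" "simpv U2 (ind U2 E) b" using IH2 by blast
      have "\<not> E a b" using ab unfolding ind_def by simp
      hence "a \<notin> S \<or> b \<notin> S" using ab Scl unfolding is_clique_def by blast
      thus ?thesis using that ab by blast
    qed
    have dnC: "d \<notin> C" using dU unfolding U2_def by simp
    have dnb: "u \<notin> C" if "E d u" for u
    proof
      assume "u \<in> C"
      hence "d \<in> C \<union> S" using nbrC sym that by blast
      thus False using dU dnC by simp
    qed
    have sd: "simpv V E d"
    proof -
      have "{u \<in> V. E d u} = {u \<in> U2. ind U2 E d u}"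
        using dnb dU U2V unfolding U2_def ind_def by auto
      thus ?thesis using sd1 dU U2V unfolding simpv_def by (auto intro: clique_ind_imp)
    qed
    have "c \<noteq> d" using cC dnC by auto
    moreover have "\<not> E c d" using dnb sym cC by blast
    ultimately show ?thesis using sc sd unfolding simpv_def by blast
  qed
qed


lemma finite_peo: "finite V \<Longrightarrow> finite {\<sigma>. is_peo V E \<sigma>}"
proof -
  assume f: "finite V"
  have "{\<sigma>. is_peo V E \<sigma>} \<subseteq> {xs. set xs \<subseteq> V \<and> length xs \<le> card V}"
    unfolding is_peo_def by (auto simp: distinct_card[symmetric])
  thus ?thesis using finite_lists_length_le[OF f] finite_subset by blast
qed

lemma peo_cons:
  assumes sg: "simple_graph V E" and sv: "simpv V E v"
    and p: "is_peo (V - {v}) (ind (V - {v}) E) \<sigma>"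
  shows "is_peo V E (v # \<sigma>)"
proof -
  have inV: "\<And>a b. E a b \<Longrightarrow> a \<in> V \<and> b \<in> V" using sg unfolding simple_graph_def by blast
  have d: "distinct \<sigma>" "set \<sigma> = V - {v}" using p unfolding is_peo_def by auto
  have cl: "is_clique (ind (V - {v}) E) {u \<in> set (drop i \<sigma>). ind (V - {v}) E (\<sigma> ! i) u}"
    if "i < length \<sigma>" for i using p that unfolding is_peo_def by blast
  show ?thesis unfolding is_peo_def
  proof (intro conjI allI impI)
    show "distinct (v # \<sigma>)" using d by simp
    show "set (v # \<sigma>) = V" using d sv unfolding simpv_def by auto
    fix i assume i: "i < length (v # \<sigma>)"
    show "is_clique E {u \<in> set (drop i (v # \<sigma>)). E ((v # \<sigma>) ! i) u}"
    proof (cases i)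
      case 0
      have "{u \<in> set (drop i (v # \<sigma>)). E ((v # \<sigma>) ! i) u} \<subseteq> {u \<in> V. E v u}"
        using 0 inV by auto
      moreover have "is_clique E {u \<in> V. E v u}" using sv unfolding simpv_def by simp
      ultimately show ?thesis using clique_sub by blast
    next
      case (Suc k)
      have k: "k < length \<sigma>" using i Suc by simp
      have "\<sigma> ! k \<in> set \<sigma>" using k by (rule nth_mem)
      hence mem: "\<sigma> ! k \<in> V - {v}" using d(2) by simp
      have sub: "set (drop k \<sigma>) \<subseteq> V - {v}" using d by (auto dest: in_set_dropD)
      have "{u \<in> set (drop i (v # \<sigma>)). E ((v # \<sigma>) ! i) u}
          = {u \<in> set (drop k \<sigma>). ind (V - {v}) E (\<sigma> ! k) u}"
        using Suc mem sub unfolding ind_def by auto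
      thus ?thesis using cl[OF k] by (simp add: clique_ind_imp)
    qed
  qed
qed

lemma count_ge:
  assumes sg: "simple_graph V E" and sv: "simpv V E v"
  shows "card {\<sigma>. is_peo (V - {v}) (ind (V - {v}) E) \<sigma>} = card ((\<lambda>\<sigma>. v # \<sigma>) ` {\<sigma>. is_peo (V - {v}) (ind (V - {v}) E) \<sigma>})"
    and "(\<lambda>\<sigma>. v # \<sigma>) ` {\<sigma>. is_peo (V - {v}) (ind (V - {v}) E) \<sigma>} \<subseteq> {\<sigma>. is_peo V E \<sigma>}"
  using peo_cons[OF sg sv] by (auto simp: card_image inj_on_def)

lemma count_main:
  assumes "simple_graph V E" "chordal V E"
  shows "2 ^ card V \<le> 2 * card {\<sigma>. is_peo V E \<sigma>}"
  using assms
proof (induction "card V" arbitrary: V E rule: less_induct)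
  case less
  note sg = less.prems(1) and ch = less.prems(2)
  have finV: "finite V" using sg unfolding simple_graph_def by blast
  have irr: "\<And>a. \<not> E a a" using sg unfolding simple_graph_def by blast
  have finP: "finite {\<sigma>. is_peo V E \<sigma>}" using finite_peo[OF finV] .
  define P where "P = (\<lambda>v. {\<sigma>. is_peo (V - {v}) (ind (V - {v}) E) \<sigma>})"
  have IHv: "2 ^ card (V - {v}) \<le> 2 * card (P v)" if "v \<in> V" for v
  proof -
    have "card (V - {v}) < card V" using card_Diff1_less[OF finV that] .
    thus ?thesis unfolding P_def
      using less.hyps ind_simple[OF sg, of "V - {v}"] ind_chordal[OF sg ch, of "V - {v}"] by blast
  qed
  have img: "card (P v) = card ((\<lambda>\<sigma>. v # \<sigma>) ` P v)" "(\<lambda>\<sigma>. v # \<sigma>) ` P v \<subseteq> {\<sigma>. is_peo V E \<sigma>}"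
    if "simpv V E v" for v
    using count_ge[OF sg that] unfolding P_def by auto
  have cle: "card (P v) \<le> card {\<sigma>. is_peo V E \<sigma>}" if "simpv V E v" for v
  proof -
    have "card ((\<lambda>\<sigma>. v # \<sigma>) ` P v) \<le> card {\<sigma>. is_peo V E \<sigma>}"
      by (rule card_mono[OF finP img(2)[OF that]])
    thus ?thesis using img(1)[OF that] by simp
  qed
  consider "card V = 0" | "card V = 1" | "card V \<ge> 2" by linarith
  thus ?case
  proof cases
    case 1
    hence "V = {}" using finV by simp
    hence "is_peo V E []" unfolding is_peo_def by simp
    hence "card {\<sigma>. is_peo V E \<sigma>} \<noteq> 0" using finP by auto
    thus ?thesis using 1 by simp
  next
    case 2
    then obtain v where V: "V = {v}" using card_1_singletonE by blast
    have sv: "simpv V E v" using V irr unfolding simpv_def is_clique_def by auto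
    have "1 \<le> 2 * card (P v)" using IHv[of v] V by simp
    hence "1 \<le> card (P v)" by simp
    thus ?thesis using cle[OF sv] 2 by simp
  next
    case 3
    obtain a b where ab: "a \<in> V" "b \<in> V" "a \<noteq> b" "simpv V E a" "simpv V E b"
    proof (cases "is_clique E V")
      case True
      have "V \<noteq> {}" using 3 by auto
      then obtain a where a: "a \<in> V" by blast
      have "card (V - {a}) \<ge> 1" using 3 a finV by simp
      hence "V - {a} \<noteq> {}" by (metis card.empty not_one_le_zero)
      then obtain b where b: "b \<in> V - {a}" by blast
      have "simpv V E u" if "u \<in> V" for u using that clique_sub[OF True, of "{w \<in> V. E u w}"]
        unfolding simpv_def by auto
      thus ?thesis using that a b by blast
    next
      case False thus ?thesis using that dirac[OF sg ch] by blast
    qed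
    have n: "card (V - {a}) = card V - 1" "card (V - {b}) = card V - 1" using ab finV by auto
    have disj: "(\<lambda>\<sigma>. a # \<sigma>) ` P a \<inter> (\<lambda>\<sigma>. b # \<sigma>) ` P b = {}" using ab by auto
    have "card ((\<lambda>\<sigma>. a # \<sigma>) ` P a \<union> (\<lambda>\<sigma>. b # \<sigma>) ` P b) \<le> card {\<sigma>. is_peo V E \<sigma>}"
      using img(2)[OF ab(4)] img(2)[OF ab(5)] by (intro card_mono[OF finP]) simp
    moreover have "card ((\<lambda>\<sigma>. a # \<sigma>) ` P a \<union> (\<lambda>\<sigma>. b # \<sigma>) ` P b) = card (P a) + card (P b)"
    proof -
      have "finite ((\<lambda>\<sigma>. a # \<sigma>) ` P a)" "finite ((\<lambda>\<sigma>. b # \<sigma>) ` P b)"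
        using finite_subset[OF img(2)[OF ab(4)] finP] finite_subset[OF img(2)[OF ab(5)] finP] .
      thus ?thesis using card_Un_disjoint[OF _ _ disj] img[OF ab(4)] img[OF ab(5)] by simp
    qed
    ultimately have le: "card (P a) + card (P b) \<le> card {\<sigma>. is_peo V E \<sigma>}" by simp
    have "2 ^ card V = 2 * 2 ^ (card V - 1)" using 3 by (cases "card V") auto
    also have "\<dots> \<le> 2 * card (P a) + 2 * card (P b)" using IHv[OF ab(1)] IHv[OF ab(2)] n by simp
    also have "\<dots> \<le> 2 * card {\<sigma>. is_peo V E \<sigma>}" using le by simp
    finally show ?thesis .
  qed
qed

theorem mainTheorem4:
  shows "\<exists>c::real. c > 0 \<and>
    (\<forall>(V::nat set) E. simple_graph V E \<and> chordal V E \<longrightarrow>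
       real (card {\<sigma>. is_peo V E \<sigma>}) \<ge> c * 2 ^ card V)"
proof (intro exI[of _ "1/2"] conjI allI impI)
  show "(0::real) < 1/2" by simp
  fix V :: "nat set" and E assume "simple_graph V E \<and> chordal V E"
  hence "2 ^ card V \<le> 2 * card {\<sigma>. is_peo V E \<sigma>}" using count_main by blast
  hence "real (2 ^ card V) \<le> real (2 * card {\<sigma>. is_peo V E \<sigma>})" by (simp only: of_nat_le_iff)
  thus "1/2 * 2 ^ card V \<le> real (card {\<sigma>. is_peo V E \<sigma>})" by simp
qed

end
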